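(* Let $d\ge 2$. (a) Every domain $D\subset T_d$ with $|D|\le d$ is optimal. (b) Every full domain in $T_d$ is optimal. (c) If $D\subset T_d$ is a domain with $|D|\ge 2$ and $|R(D)|=1$, then $D$ is optimal. (d) If $D\subset T_d$ is an optimal domain with $|D|\ge 2$, then $|R(D)|\le d-2$.
   Context: $T_d$ is the $d$-regular tree (connected, acyclic, every vertex of degree $d$). A domain is a finite nonempty connected set $D$ of vertices of $T_d$, identified with its induced subgraph. For $x\in D$, $\deg_D(x)$ is the number of neighbours of $x$ lying in $D$. The (inner vertex) boundary is $\partial D=\{x\in D:\deg_D(x)<d\}$. For $k\ge1$, $I_d(k)=\min\{|\partial D| : D\subset T_d \text{ a domain with } |D|=k\}$, and a domain $D$ is optimal if $|\partial D|=I_d(|D|)$. For a domain with $|D|\ge 2$: the leaves are $L(D)=\{x\in\partial D:\deg_D(x)=1\}$, the residual boundary is $R(D)=\{x\in\partial D: 2\le \deg_D(x)\le d-1\}$, and $D$ is full if $R(D)=\emptyset$ (equivalently $\partial D=L(D)$). *)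

theory Defs
  imports Main
begin

text \<open>Concrete model of the d-regular tree T_d: the Cayley graph of the free product of
  d copies of Z/2. Vertices are reduced words: lists over letters 0..d-1 with no two
  consecutive letters equal.\<close>

definition tree_vert :: "nat \<Rightarrow> nat list set" where
  "tree_vert d = {xs. set xs \<subseteq> {..<d} \<and> successively (\<noteq>) xs}"

definition tree_adj :: "nat \<Rightarrow> nat list \<Rightarrow> nat list \<Rightarrow> bool" where
  "tree_adj d x y \<longleftrightarrow> x \<in> tree_vert d \<and> y \<in> tree_vert d \<and>
     ((\<exists>a. y = a # x) \<or> (\<exists>a. x = a # y))"

definition is_domain :: "nat \<Rightarrow> nat list set \<Rightarrow> bool" where
  "is_domain d D \<longleftrightarrow> finite D \<and> D \<noteq> {} \<and> D \<subseteq> tree_vert d \<and>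
     (\<forall>x\<in>D. \<forall>y\<in>D. (\<lambda>u v. u \<in> D \<and> v \<in> D \<and> tree_adj d u v)\<^sup>*\<^sup>* x y)"

definition degD :: "nat \<Rightarrow> nat list set \<Rightarrow> nat list \<Rightarrow> nat" where
  "degD d D x = card {y \<in> D. tree_adj d x y}"

definition bdry :: "nat \<Rightarrow> nat list set \<Rightarrow> nat list set" where
  "bdry d D = {x \<in> D. degD d D x < d}"

definition Iso :: "nat \<Rightarrow> nat \<Rightarrow> nat" where
  "Iso d k = Inf {card (bdry d D) | D. is_domain d D \<and> card D = k}"

definition optimal :: "nat \<Rightarrow> nat list set \<Rightarrow> bool" where
  "optimal d D \<longleftrightarrow> card (bdry d D) = Iso d (card D)"

definition leavesD :: "nat \<Rightarrow> nat list set \<Rightarrow> nat list set" where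
  "leavesD d D = {x \<in> bdry d D. degD d D x = 1}"

definition resid :: "nat \<Rightarrow> nat list set \<Rightarrow> nat list set" where
  "resid d D = {x \<in> bdry d D. 2 \<le> degD d D x \<and> degD d D x \<le> d - 1}"

definition full :: "nat \<Rightarrow> nat list set \<Rightarrow> bool" where
  "full d D \<longleftrightarrow> resid d D = {}"

end

theory Submission
  imports Defs
begin

lemma adj_iff:
  "tree_adj d x y \<longleftrightarrow> x \<in> tree_vert d \<and> y \<in> tree_vert d \<and>
     ((y \<noteq> [] \<and> tl y = x) \<or> (x \<noteq> [] \<and> tl x = y))"
  unfolding tree_adj_def by (cases x; cases y) auto

lemma adj_sym: "tree_adj d x y = tree_adj d y x"
  unfolding tree_adj_def by auto

lemma not_adj_self: "\<not> tree_adj d x x"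
  unfolding tree_adj_def by auto

lemma deg_le_card: "finite D \<Longrightarrow> x \<in> D \<Longrightarrow> degD d D x \<le> card D - 1"
proof -
  assume f: "finite D" and x: "x \<in> D"
  have "{y \<in> D. tree_adj d x y} \<subseteq> D - {x}" using not_adj_self by auto
  then have "degD d D x \<le> card (D - {x})" unfolding degD_def using f by (intro card_mono) auto
  then show ?thesis using x f by simp
qed

lemma deg_le_d: "degD d D x \<le> d"
proof -
  define f where "f a = (if x = [] then [a] else if a = hd x then tl x else a # x)" for a
  have "{y \<in> D. tree_adj d x y} \<subseteq> f ` {..<d}"
  proof
    fix y assume "y \<in> {y \<in> D. tree_adj d x y}"
    then have a: "tree_adj d x y" by auto
    then have xv: "x \<in> tree_vert d" and yv: "y \<in> tree_vert d" unfolding tree_adj_def by auto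
    from a consider (c) b where "y = b # x" | (p) b where "x = b # y" unfolding tree_adj_def by auto
    then show "y \<in> f ` {..<d}"
    proof cases
      case c
      have "b < d" using yv c unfolding tree_vert_def by auto
      moreover have "x \<noteq> [] \<Longrightarrow> b \<noteq> hd x" using yv c unfolding tree_vert_def
        by (cases x) auto
      ultimately show ?thesis unfolding f_def using c by (intro image_eqI[of _ _ b]) auto
    next
      case p
      have "b < d" using xv p unfolding tree_vert_def by auto
      then show ?thesis unfolding f_def using p by (intro image_eqI[of _ _ b]) auto
    qed
  qed
  then have "degD d D x \<le> card (f ` {..<d})" unfolding degD_def by (intro card_mono) auto
  also have "\<dots> \<le> d" using card_image_le[of "{..<d}" f] by simp
  finally show ?thesis .
qed

lemma outside_nb:
  assumes fin: "finite D" and xv: "x \<in> tree_vert d" and lt: "degD d D x < d"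
  shows "\<exists>y. y \<notin> D \<and> tree_adj d x y"
proof (rule ccontr)
  assume "\<not> ?thesis"
  then have allin: "\<And>y. tree_adj d x y \<Longrightarrow> y \<in> D" by auto
  define f where "f a = (if x = [] then [a] else if a = hd x then tl x else a # x)" for a
  have inj: "inj_on f {..<d}"
    unfolding f_def inj_on_def by (auto split: if_splits dest: arg_cong[where f=length])
  have "f ` {..<d} \<subseteq> {y \<in> D. tree_adj d x y}"
  proof
    fix y assume "y \<in> f ` {..<d}"
    then obtain a where a: "a < d" "y = f a" by auto
    have "tree_adj d x y"
    proof (cases x)
      case Nil
      then show ?thesis using a xv unfolding f_def tree_adj_def tree_vert_def by auto
    next
      case (Cons c t)
      show ?thesis
      proof (cases "a = c")
        case True
        then have "y = t" using a Cons unfolding f_def by auto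
        moreover have "t \<in> tree_vert d" using xv Cons unfolding tree_vert_def
          by (auto simp: successively_Cons)
        ultimately show ?thesis using xv Cons unfolding tree_adj_def by auto
      next
        case False
        then have "y = a # x" using a Cons unfolding f_def by auto
        moreover have "a # x \<in> tree_vert d" using xv Cons a False unfolding tree_vert_def
          by (auto simp: successively_Cons)
        ultimately show ?thesis using xv unfolding tree_adj_def by auto
      qed
    qed
    then show "y \<in> {y \<in> D. tree_adj d x y}" using allin by auto
  qed
  then have "card (f ` {..<d}) \<le> degD d D x" unfolding degD_def using fin by (intro card_mono) auto
  then show False using card_image[OF inj] lt by simp
qed


lemma suffix_top:
  assumes dom: "is_domain d D" and t: "t \<in> D" and top: "t = [] \<or> tl t \<notin> D" and x: "x \<in> D"
  shows "\<exists>u. x = u @ t"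
proof -
  let ?R = "\<lambda>u v. u \<in> D \<and> v \<in> D \<and> tree_adj d u v"
  have "?R\<^sup>*\<^sup>* t x" using dom t x unfolding is_domain_def by auto
  then show ?thesis
  proof (induction rule: rtranclp_induct)
    case base
    then show ?case by auto
  next
    case (step y z)
    then obtain u where u: "y = u @ t" by auto
    from step(2) have zD: "z \<in> D" and a: "tree_adj d y z" by auto
    from a consider (c) b where "z = b # y" | (p) b where "y = b # z" unfolding tree_adj_def by auto
    then show ?case
    proof cases
      case c then show ?thesis using u by (intro exI[of _ "b # u"]) auto
    next
      case p
      show ?thesis
      proof (cases u)
        case Nil
        then have "t = b # z" using u p by auto
        then show ?thesis using top zD by auto
      next
        case (Cons c u')
        then show ?thesis using u p by auto
      qed
    qed
  qed
qed

lemma top_card: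
  assumes dom: "is_domain d D"
  shows "card {y \<in> D. y \<noteq> [] \<and> tl y \<in> D} = card D - 1"
proof -
  have fin: "finite D" and ne: "D \<noteq> {}" using dom unfolding is_domain_def by auto
  define m where "m = Min (length ` D)"
  have "m \<in> length ` D" unfolding m_def using fin ne by auto
  then obtain t where t: "t \<in> D" "length t = m" by auto
  have tmin: "\<And>y. y \<in> D \<Longrightarrow> length t \<le> length y" 
    using Min_le[of "length ` D"] fin t(2) unfolding m_def by auto
  have top: "t = [] \<or> tl t \<notin> D"
  proof (rule ccontr)
    assume "\<not> ?thesis"
    then have "t \<noteq> []" "tl t \<in> D" by auto
    then show False using tmin[of "tl t"] by (cases t) auto
  qed
  have "{y \<in> D. y \<noteq> [] \<and> tl y \<in> D} = D - {t}"
  proof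
    show "{y \<in> D. y \<noteq> [] \<and> tl y \<in> D} \<subseteq> D - {t}" using top by auto
  next
    show "D - {t} \<subseteq> {y \<in> D. y \<noteq> [] \<and> tl y \<in> D}"
    proof
      fix y assume y: "y \<in> D - {t}"
      show "y \<in> {y \<in> D. y \<noteq> [] \<and> tl y \<in> D}"
      proof (rule ccontr)
        assume "\<not> ?thesis"
        then have ytop: "y = [] \<or> tl y \<notin> D" using y by auto
        obtain u where u: "y = u @ t" using suffix_top[OF dom t(1) top] y by auto
        obtain v where v: "t = v @ y" using suffix_top[OF dom _ ytop t(1)] y by auto
        from u v have "length y = length u + length t" "length t = length v + length y" by simp_all
        then have "u = []" by simp
        then show False using u y by simp
      qed
    qed
  qed
  then show ?thesis using t fin by simp
qed

lemma card_filter_sum: "finite A \<Longrightarrow> card {y \<in> A. P y} = (\<Sum>y\<in>A. if P y then 1 else 0::nat)"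
  using sum.inter_filter[of A "\<lambda>_. 1::nat" P] by simp

lemma deg_sum:
  assumes dom: "is_domain d D"
  shows "(\<Sum>x\<in>D. degD d D x) = 2 * (card D - 1)"
proof -
  have fin: "finite D" and sub: "D \<subseteq> tree_vert d" using dom unfolding is_domain_def by auto
  let ?A = "\<lambda>x y. if y \<noteq> [] \<and> tl y = x then 1 else 0::nat"
  let ?B = "\<lambda>x y. if x \<noteq> [] \<and> tl x = y then 1 else 0::nat"
  have split: "(if tree_adj d x y then 1 else 0) = ?A x y + ?B x y" if "x \<in> D" "y \<in> D" for x y
  proof -
    have xv: "x \<in> tree_vert d" "y \<in> tree_vert d" using that sub by auto
    have nb: "\<not> ((y \<noteq> [] \<and> tl y = x) \<and> (x \<noteq> [] \<and> tl x = y))"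
    proof
      assume h: "(y \<noteq> [] \<and> tl y = x) \<and> (x \<noteq> [] \<and> tl x = y)"
      then have "length x = length y - 1" "length y = length x - 1" "length x > 0" "length y > 0"
        by (metis length_tl, metis length_tl, simp, simp)
      then show False by linarith
    qed
    have e: "tree_adj d x y = ((y \<noteq> [] \<and> tl y = x) \<or> (x \<noteq> [] \<and> tl x = y))"
      using adj_iff[of d x y] xv by blast
    show ?thesis unfolding e using nb
      by (cases "y \<noteq> [] \<and> tl y = x"; cases "x \<noteq> [] \<and> tl x = y") simp_all
  qed
  have eqA: "(\<Sum>x\<in>D. \<Sum>y\<in>D. ?A x y) = (\<Sum>y\<in>D. if y \<noteq> [] \<and> tl y \<in> D then 1 else 0)"
  proof -
    have "(\<Sum>x\<in>D. \<Sum>y\<in>D. ?A x y) = (\<Sum>y\<in>D. \<Sum>x\<in>D. ?A x y)" by (rule sum.swap)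
    also have "\<dots> = (\<Sum>y\<in>D. if y \<noteq> [] \<and> tl y \<in> D then 1 else 0)"
      using fin by (intro sum.cong refl) (auto simp: sum.delta)
    finally show ?thesis .
  qed
  have eqB: "(\<Sum>x\<in>D. \<Sum>y\<in>D. ?B x y) = (\<Sum>y\<in>D. if y \<noteq> [] \<and> tl y \<in> D then 1 else 0)"
    using fin by (intro sum.cong refl) (auto simp: sum.delta')
  have "(\<Sum>x\<in>D. degD d D x) = (\<Sum>x\<in>D. \<Sum>y\<in>D. ?A x y + ?B x y)"
    unfolding degD_def using fin split by (intro sum.cong refl) (simp add: card_filter_sum)
  also have "\<dots> = (\<Sum>x\<in>D. \<Sum>y\<in>D. ?A x y) + (\<Sum>x\<in>D. \<Sum>y\<in>D. ?B x y)"
    by (simp add: sum.distrib)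
  also have "\<dots> = 2 * (\<Sum>y\<in>D. if y \<noteq> [] \<and> tl y \<in> D then 1 else 0)"
    unfolding eqA eqB by simp
  finally show ?thesis using top_card[OF dom] card_filter_sum[OF fin, of "\<lambda>y. y \<noteq> [] \<and> tl y \<in> D"]
    by simp
qed


lemma deg_pos:
  assumes dom: "is_domain d D" and k: "card D \<ge> 2" and x: "x \<in> D"
  shows "degD d D x \<ge> 1"
proof -
  have fin: "finite D" using dom unfolding is_domain_def by auto
  have "\<exists>y\<in>D. y \<noteq> x"
  proof (rule ccontr)
    assume "\<not> ?thesis"
    then have "D \<subseteq> {x}" by auto
    then have "card D \<le> 1" using card_mono[of "{x}" D] by auto
    then show False using k by simp
  qed
  then obtain y where y: "y \<in> D" "y \<noteq> x" by auto
  let ?R = "\<lambda>u v. u \<in> D \<and> v \<in> D \<and> tree_adj d u v"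
  have "?R\<^sup>*\<^sup>* x y" using dom x y unfolding is_domain_def by auto
  then obtain z where "?R x z" using y(2) by (blast elim: converse_rtranclpE)
  then have "z \<in> {y \<in> D. tree_adj d x y}" by auto
  then have "{y \<in> D. tree_adj d x y} \<noteq> {}" by auto
  then show ?thesis unfolding degD_def using fin by (simp add: Suc_le_eq card_gt_0_iff)
qed

lemma key:
  assumes d: "d \<ge> 2" and dom: "is_domain d D" and k: "card D \<ge> 2"
  shows "(d - 1) * card (D - bdry d D) + (\<Sum>x\<in>resid d D. degD d D x - 1) + 2 = card D"
    and "card (resid d D) \<le> (\<Sum>x\<in>resid d D. degD d D x - 1)"
    and "(\<Sum>x\<in>resid d D. degD d D x - 1) \<le> card (resid d D) * (d - 2)"
    and "card (bdry d D) + card (D - bdry d D) = card D"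
proof -
  have fin: "finite D" using dom unfolding is_domain_def by auto
  have bsub: "bdry d D \<subseteq> D" unfolding bdry_def by auto
  have rsub: "resid d D \<subseteq> bdry d D" unfolding resid_def by auto
  have finb: "finite (bdry d D)" using fin bsub finite_subset by auto
  have finr: "finite (resid d D)" using finb rsub finite_subset by auto
  define S where "S = (\<Sum>x\<in>resid d D. degD d D x - 1)"
  define i where "i = card (D - bdry d D)"
  define b where "b = card (bdry d D)"
  show bi: "card (bdry d D) + card (D - bdry d D) = card D"
    using fin bsub card_Diff_subset[OF finb bsub] card_mono[OF fin bsub] by simp
  have int: "degD d D x = d" if "x \<in> D - bdry d D" for x
    using that deg_le_d[of d D x] unfolding bdry_def by auto
  have lf: "degD d D x - 1 = 0" if "x \<in> bdry d D - resid d D" for x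
    using that deg_pos[OF dom k, of x] unfolding bdry_def resid_def by auto
  have "(\<Sum>x\<in>D. degD d D x) = (\<Sum>x\<in>D - bdry d D. degD d D x) + (\<Sum>x\<in>bdry d D. degD d D x)"
    using sum.subset_diff[OF bsub fin] by simp
  also have "(\<Sum>x\<in>D - bdry d D. degD d D x) = d * i"
  proof -
    have "(\<Sum>x\<in>D - bdry d D. degD d D x) = (\<Sum>x\<in>D - bdry d D. d)"
      using int by (intro sum.cong refl)
    then show ?thesis unfolding i_def by simp
  qed
  also have "(\<Sum>x\<in>bdry d D. degD d D x) = (\<Sum>x\<in>bdry d D. 1 + (degD d D x - 1))"
  proof (intro sum.cong refl)
    fix x assume "x \<in> bdry d D"
    then have "1 \<le> degD d D x" using deg_pos[OF dom k] bsub by auto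
    then show "degD d D x = 1 + (degD d D x - 1)" by simp
  qed
  also have "\<dots> = b + (\<Sum>x\<in>bdry d D. degD d D x - 1)"
    unfolding b_def sum.distrib by simp
  also have "(\<Sum>x\<in>bdry d D. degD d D x - 1) = (\<Sum>x\<in>bdry d D - resid d D. degD d D x - 1) + S"
    unfolding S_def using sum.subset_diff[OF rsub finb] by simp
  also have "(\<Sum>x\<in>bdry d D - resid d D. degD d D x - 1) = 0"
    using lf by simp
  finally have eq: "d * i + (b + (0 + S)) = 2 * (card D - 1)" using deg_sum[OF dom] by simp
  have di: "d * i = (d - 1) * i + i" using d by (cases d) auto
  from eq di bi show "(d - 1) * card (D - bdry d D) + (\<Sum>x\<in>resid d D. degD d D x - 1) + 2 = card D"
    unfolding S_def[symmetric] i_def[symmetric] b_def[symmetric] using k by linarith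
  have "(\<Sum>x\<in>resid d D. (1::nat)) \<le> S" unfolding S_def
    by (intro sum_mono) (auto simp: resid_def)
  then show "card (resid d D) \<le> S" by simp
  show "S \<le> card (resid d D) * (d - 2)" unfolding S_def
    using sum_bounded_above[of "resid d D" "\<lambda>x. degD d D x - 1" "d - 2"] by (force simp: resid_def)
qed


lemma grow_step:
  assumes d: "d \<ge> 2" and dom: "is_domain d D" and r: "r \<in> bdry d D"
    and rs: "resid d D \<subseteq> {r}"
  shows "\<exists>D'. is_domain d D' \<and> card D' = Suc (card D) \<and> card (resid d D') \<le> 1"
proof -
  have fin: "finite D" and sub: "D \<subseteq> tree_vert d" and ne: "D \<noteq> {}"
    using dom unfolding is_domain_def by auto
  have rD: "r \<in> D" and rlt: "degD d D r < d" using r unfolding bdry_def by auto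
  obtain y where yn: "y \<notin> D" and ry: "tree_adj d r y"
    using outside_nb[OF fin _ rlt] sub rD by auto
  have yv: "y \<in> tree_vert d" using ry unfolding tree_adj_def by auto
  define D' where "D' = insert y D"
  have fin': "finite D'" unfolding D'_def using fin by simp
  have card': "card D' = Suc (card D)" unfolding D'_def using fin yn by simp
  let ?R = "\<lambda>u v. u \<in> D \<and> v \<in> D \<and> tree_adj d u v"
  let ?R' = "\<lambda>u v. u \<in> D' \<and> v \<in> D' \<and> tree_adj d u v"
  have mono: "?R\<^sup>*\<^sup>* u v \<Longrightarrow> ?R'\<^sup>*\<^sup>* u v" for u v
  proof -
    assume "?R\<^sup>*\<^sup>* u v"
    moreover have "?R \<le> ?R'" unfolding D'_def by auto
    ultimately show ?thesis using rtranclp_mono by blast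
  qed
  have conn: "\<And>u v. u \<in> D \<Longrightarrow> v \<in> D \<Longrightarrow> ?R\<^sup>*\<^sup>* u v" using dom unfolding is_domain_def by blast
  have ry': "?R' r y" "?R' y r" using ry rD adj_sym[of d r y] unfolding D'_def by auto
  have dom': "is_domain d D'"
    unfolding is_domain_def
  proof (intro conjI ballI)
    show "finite D'" by (rule fin')
    show "D' \<noteq> {}" unfolding D'_def by simp
    show "D' \<subseteq> tree_vert d" unfolding D'_def using sub yv by simp
  next
    fix u v assume u: "u \<in> D'" and v: "v \<in> D'"
    show "?R'\<^sup>*\<^sup>* u v"
    proof (cases "u = y")
      case True
      show ?thesis
      proof (cases "v = y")
        case True then show ?thesis using \<open>u = y\<close> by simp
      next
        case False
        then have "v \<in> D" using v unfolding D'_def by simp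
        then have "?R'\<^sup>*\<^sup>* r v" using mono conn rD by blast
        then show ?thesis using converse_rtranclp_into_rtranclp[of ?R' y r v, OF ry'(2)] \<open>u = y\<close> by simp
      qed
    next
      case False
      then have uD: "u \<in> D" using u unfolding D'_def by simp
      show ?thesis
      proof (cases "v = y")
        case True
        have "?R'\<^sup>*\<^sup>* u r" using mono conn rD uD by blast
        then show ?thesis using ry'(1) True by (simp add: rtranclp.rtrancl_into_rtrancl)
      next
        case False
        then have "v \<in> D" using v unfolding D'_def by simp
        then show ?thesis using mono conn uD by blast
      qed
    qed
  qed
  have degx: "degD d D' x = degD d D x + (if tree_adj d x y then 1 else 0)" if "x \<in> D" for x
  proof (cases "tree_adj d x y")
    case True
    then have "{z \<in> D'. tree_adj d x z} = insert y {z \<in> D. tree_adj d x z}" unfolding D'_def by auto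
    then show ?thesis unfolding degD_def using True fin yn by simp
  next
    case False
    then have "{z \<in> D'. tree_adj d x z} = {z \<in> D. tree_adj d x z}" unfolding D'_def by auto
    then show ?thesis unfolding degD_def using False by simp
  qed
  have degy: "degD d D' y = card {x \<in> D. tree_adj d x y}"
  proof -
    have "{z \<in> D'. tree_adj d y z} = {x \<in> D. tree_adj d y x}"
      unfolding D'_def using not_adj_self[of d y] by auto
    also have "\<dots> = {x \<in> D. tree_adj d x y}"
      by (intro Collect_cong) (metis adj_sym)
    finally show ?thesis unfolding degD_def by simp
  qed
  have "(\<Sum>x\<in>D'. degD d D' x) = degD d D' y + (\<Sum>x\<in>D. degD d D' x)"
    unfolding D'_def using fin yn by simp
  also have "(\<Sum>x\<in>D. degD d D' x) = (\<Sum>x\<in>D. degD d D x) + (\<Sum>x\<in>D. if tree_adj d x y then 1 else 0)"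
    using degx by (simp add: sum.distrib)
  also have "(\<Sum>x\<in>D. if tree_adj d x y then 1 else 0) = degD d D' y"
    unfolding degy using card_filter_sum[OF fin, of "\<lambda>x. tree_adj d x y"] by simp
  finally have "2 * (card D' - 1) = 2 * degD d D' y + 2 * (card D - 1)"
    using deg_sum[OF dom] deg_sum[OF dom'] by simp
  moreover have "card D > 0" using ne fin by (simp add: card_gt_0_iff)
  ultimately have dy1: "degD d D' y = 1" using card' by simp
  have "{x \<in> D. tree_adj d x y} = {r}"
  proof -
    have c1: "card {x \<in> D. tree_adj d x y} = 1" using dy1 degy by simp
    have "r \<in> {x \<in> D. tree_adj d x y}" using rD ry by simp
    then show ?thesis using c1 by (metis card_1_singletonE singletonD)
  qed
  then have nadj: "\<And>x. x \<in> D \<Longrightarrow> x \<noteq> r \<Longrightarrow> \<not> tree_adj d x y" by auto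
  have "resid d D' \<subseteq> {r}"
  proof
    fix x assume x: "x \<in> resid d D'"
    then have xD': "x \<in> D'" and x2: "2 \<le> degD d D' x" and xlt: "degD d D' x < d"
      unfolding resid_def bdry_def by auto
    have "x \<noteq> y" using x2 dy1 by auto
    then have xD: "x \<in> D" using xD' unfolding D'_def by simp
    show "x \<in> {r}"
    proof (rule ccontr)
      assume "x \<notin> {r}"
      then have "degD d D' x = degD d D x" using degx[OF xD] nadj[OF xD] by simp
      then have "x \<in> resid d D" using xD x2 xlt unfolding resid_def bdry_def by auto
      then show False using rs \<open>x \<notin> {r}\<close> by auto
    qed
  qed
  then have "card (resid d D') \<le> 1" using card_mono[of "{r}" "resid d D'"] by simp
  then show ?thesis using dom' card' by blast
qed

lemma bdry_ne:
  assumes d: "d \<ge> 2" and dom: "is_domain d D"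
  shows "bdry d D \<noteq> {}"
proof
  assume e: "bdry d D = {}"
  have fin: "finite D" and ne: "D \<noteq> {}" using dom unfolding is_domain_def by auto
  have "\<And>x. x \<in> D \<Longrightarrow> d \<le> degD d D x" using e unfolding bdry_def by auto
  then have "card D * d \<le> (\<Sum>x\<in>D. degD d D x)" using sum_bounded_below[of D d "degD d D"] by simp
  then have "card D * d \<le> 2 * (card D - 1)" using deg_sum[OF dom] by simp
  moreover have "card D * 2 \<le> card D * d" using d by simp
  moreover have "card D > 0" using fin ne by (simp add: card_gt_0_iff)
  ultimately show False by linarith
qed

lemma grow:
  assumes d: "d \<ge> 2"
  shows "k \<ge> 1 \<Longrightarrow> \<exists>D. is_domain d D \<and> card D = k \<and> card (resid d D) \<le> 1"
proof (induction k)
  case 0 then show ?case by simp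
next
  case (Suc k)
  show ?case
  proof (cases "k = 0")
    case True
    have dom: "is_domain d {[]}" unfolding is_domain_def tree_vert_def by auto
    have "resid d {[]} \<subseteq> {[]}" unfolding resid_def bdry_def by auto
    then have "card (resid d {[]}) \<le> 1" using card_mono[of "{[]}" "resid d {[]}"] by simp
    then show ?thesis using dom True by force
  next
    case False
    then obtain D where dom: "is_domain d D" and cD: "card D = k" and rs: "card (resid d D) \<le> 1"
      using Suc by auto
    have fin: "finite D" using dom unfolding is_domain_def by auto
    have finr: "finite (resid d D)" using fin unfolding resid_def bdry_def by auto
    obtain r where r: "r \<in> bdry d D" "resid d D \<subseteq> {r}"
    proof (cases "resid d D = {}")
      case True
      then show ?thesis using that bdry_ne[OF d dom] by blast
    next
      case False
      then have "card (resid d D) = 1" using rs finr by (simp add: card_gt_0_iff le_Suc_eq)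
      then obtain r0 where "resid d D = {r0}" by (metis card_1_singletonE)
      moreover then have "r0 \<in> bdry d D" unfolding resid_def by auto
      ultimately show ?thesis using that by blast
    qed
    show ?thesis using grow_step[OF d dom r] cD by auto
  qed
qed


lemma small_bdry:
  assumes d: "d \<ge> 2" and dom: "is_domain d D" and c: "card D \<le> d"
  shows "bdry d D = D"
proof -
  have fin: "finite D" and ne: "D \<noteq> {}" using dom unfolding is_domain_def by auto
  have "card D > 0" using fin ne by (simp add: card_gt_0_iff)
  then have "\<And>x. x \<in> D \<Longrightarrow> degD d D x < d" using deg_le_card[OF fin] c
    by (meson diff_less le_less_trans less_le_trans zero_less_one)
  then show ?thesis unfolding bdry_def by auto
qed

lemma bdd_nat: "bdd_below (X :: nat set)"
  by (meson bdd_below.I zero_le)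

lemma compare:
  assumes d: "d \<ge> 2" and dom: "is_domain d D" and k: "card D \<ge> 2"
    and dom': "is_domain d D'" and cc: "card D' = card D"
    and S: "(\<Sum>x\<in>resid d D. degD d D x - 1) \<le> d - 2"
  shows "card (bdry d D) \<le> card (bdry d D')"
proof -
  have k': "card D' \<ge> 2" using cc k by simp
  note K = key[OF d dom k] and K' = key[OF d dom' k']
  define i where "i = card (D - bdry d D)"
  define i' where "i' = card (D' - bdry d D')"
  define s where "s = (\<Sum>x\<in>resid d D. degD d D x - 1)"
  define s' where "s' = (\<Sum>x\<in>resid d D'. degD d D' x - 1)"
  have e: "(d - 1) * i + s = (d - 1) * i' + s'"
    using K(1) K'(1) cc unfolding i_def i'_def s_def s'_def by linarith
  have "i' \<le> i"
  proof (rule ccontr)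
    assume "\<not> i' \<le> i"
    then have "Suc i \<le> i'" by simp
    then have "(d - 1) * Suc i \<le> (d - 1) * i'" by (rule mult_le_mono2)
    then have "(d - 1) * i + (d - 1) \<le> (d - 1) * i'" by simp
    then have "s \<ge> d - 1" using e by linarith
    then show False using S d unfolding s_def by linarith
  qed
  then show ?thesis using K(4) K'(4) cc unfolding i_def i'_def by linarith
qed

lemma opt_crit:
  assumes d: "d \<ge> 2" and dom: "is_domain d D" and k: "card D \<ge> 2"
    and S: "(\<Sum>x\<in>resid d D. degD d D x - 1) \<le> d - 2"
  shows "optimal d D"
  unfolding optimal_def Iso_def
proof (rule cInf_eq_minimum[symmetric])
  show "card (bdry d D) \<in> {card (bdry d D') |D'. is_domain d D' \<and> card D' = card D}"
    using dom by blast
next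
  fix x assume "x \<in> {card (bdry d D') |D'. is_domain d D' \<and> card D' = card D}"
  then obtain D' where "is_domain d D'" "card D' = card D" "x = card (bdry d D')" by blast
  then show "card (bdry d D) \<le> x" using compare[OF d dom k _ _ S] by simp
qed

theorem mainTheorem9:
  fixes d :: nat
  assumes "d \<ge> 2"
  shows "(\<forall>D. is_domain d D \<and> card D \<le> d \<longrightarrow> optimal d D)
    \<and> (\<forall>D. is_domain d D \<and> card D \<ge> 2 \<and> full d D \<longrightarrow> optimal d D)
    \<and> (\<forall>D. is_domain d D \<and> card D \<ge> 2 \<and> card (resid d D) = 1 \<longrightarrow> optimal d D)
    \<and> (\<forall>D. is_domain d D \<and> card D \<ge> 2 \<and> optimal d D \<longrightarrow> card (resid d D) \<le> d - 2)"
proof (intro conjI allI impI)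
  fix D assume h: "is_domain d D \<and> card D \<le> d"
  show "optimal d D"
    unfolding optimal_def Iso_def
  proof (rule cInf_eq_minimum[symmetric])
    show "card (bdry d D) \<in> {card (bdry d D') |D'. is_domain d D' \<and> card D' = card D}"
      using h by blast
  next
    fix x assume "x \<in> {card (bdry d D') |D'. is_domain d D' \<and> card D' = card D}"
    then obtain D' where D': "is_domain d D'" "card D' = card D" "x = card (bdry d D')" by blast
    then show "card (bdry d D) \<le> x" using small_bdry[OF assms] h by simp
  qed
next
  fix D assume h: "is_domain d D \<and> 2 \<le> card D \<and> full d D"
  then have "resid d D = {}" unfolding full_def by simp
  then show "optimal d D" using opt_crit[OF assms] h by simp
next
  fix D assume h: "is_domain d D \<and> 2 \<le> card D \<and> card (resid d D) = 1"
  then have "(\<Sum>x\<in>resid d D. degD d D x - 1) \<le> d - 2"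
    using key(3)[OF assms, of D] by simp
  then show "optimal d D" using opt_crit[OF assms] h by simp
next
  fix D assume h: "is_domain d D \<and> 2 \<le> card D \<and> optimal d D"
  then have dom: "is_domain d D" and k: "2 \<le> card D" and opt: "optimal d D" by auto
  show "card (resid d D) \<le> d - 2"
  proof (rule ccontr)
    assume "\<not> ?thesis"
    then have R: "card (resid d D) \<ge> d - 1" by simp
    obtain E where E: "is_domain d E" "card E = card D" "card (resid d E) \<le> 1"
      using grow[OF assms, of "card D"] k by auto
    have kE: "card E \<ge> 2" using E k by simp
    note K = key[OF assms dom k] and KE = key[OF assms E(1) kE]
    have sE: "(\<Sum>x\<in>resid d E. degD d E x - 1) \<le> d - 2"
      using KE(3) E(3) by (metis le_trans mult_le_mono1 mult_1)
    define i where "i = card (D - bdry d D)"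
    define j where "j = card (E - bdry d E)"
    define s where "s = (\<Sum>x\<in>resid d D. degD d D x - 1)"
    define t where "t = (\<Sum>x\<in>resid d E. degD d E x - 1)"
    have e: "(d - 1) * i + s = (d - 1) * j + t"
      using K(1) KE(1) E(2) unfolding i_def j_def s_def t_def by linarith
    have sge: "s \<ge> d - 1" using K(2) R unfolding s_def by linarith
    have "i < j"
    proof (rule ccontr)
      assume "\<not> i < j"
      then have "(d - 1) * j \<le> (d - 1) * i" by (simp add: mult_le_mono2)
      then have "t \<ge> s" using e by linarith
      then show False using sE sge assms unfolding t_def by linarith
    qed
    then have lt: "card (bdry d E) < card (bdry d D)"
      using K(4) KE(4) E(2) unfolding i_def j_def by linarith
    have "Iso d (card D) \<le> card (bdry d E)"
      unfolding Iso_def using E by (intro cInf_lower[OF _ bdd_nat]) blast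
    then show False using opt lt unfolding optimal_def by simp
  qed
qed

end
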